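(* Let $X$ be a real Banach space, $k\in\mathbb N$, and $Y,Z$ closed subspaces with $Z\subseteq Y\subseteq X$. Suppose $Z$ is an $M$-ideal in $X$ and $Y/Z$ has property-$(k-U)$ in $X/Z$. Then $Y$ has property-$(k-U)$ in $X$.
   Context: $Z^\perp=\{x^*\in X^*:x^*|_Z=0\}$. $Z$ is an $M$-ideal in $X$ if there is a closed subspace $G$ of $X^*$ with $X^*=Z^\perp\oplus G$ and $\|u+g\|=\|u\|+\|g\|$ for $u\in Z^\perp,g\in G$. For a closed subspace $V$ of $E$ and $v^*\in V^*$, $HB(v^* )=\{e^*\in E^*:e^*|_V=v^*,\ \|e^*\|=\|v^*\|\}$; for a set $A$ and $a\in A$, $\dim A=\dim\operatorname{span}(A-a)$. $V$ has property-$(k-U)$ in $E$ if $\dim HB(v^* )\le k-1$ for all $v^*\in S_{V^*}$. $Y/Z$ is regarded as a subspace of $X/Z$ with the quotient norm. *)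

theory Defs
  imports "HOL-Analysis.Analysis"
begin

definition annihilator :: "'a::real_normed_vector set \<Rightarrow> ('a \<Rightarrow>\<^sub>L real) set" where
  "annihilator Z = {f. \<forall>z\<in>Z. blinfun_apply f z = 0}"

definition M_ideal :: "'a::real_normed_vector set \<Rightarrow> bool" where
  "M_ideal Z \<longleftrightarrow> (\<exists>G :: ('a \<Rightarrow>\<^sub>L real) set.
      subspace G \<and> closed G \<and>
      (\<forall>f. \<exists>u\<in>annihilator Z. \<exists>g\<in>G. f = u + g) \<and>
      annihilator Z \<inter> G = {0} \<and>
      (\<forall>u\<in>annihilator Z. \<forall>g\<in>G. norm (u + g) = norm u + norm g))"

definition quotient_norm :: "'a::real_normed_vector set \<Rightarrow> 'a \<Rightarrow> real" where
  "quotient_norm Z x = infdist x Z"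

text \<open>A normed space presented as X equipped with a (semi)norm p (X itself: p = norm;
  X/Z: p = quotient_norm Z, elements represented by their representatives).\<close>
definition lin_on :: "'a::real_vector set \<Rightarrow> ('a \<Rightarrow> real) \<Rightarrow> bool" where
  "lin_on V f \<longleftrightarrow> (\<forall>x\<in>V. \<forall>y\<in>V. f (x + y) = f x + f y) \<and> (\<forall>c. \<forall>x\<in>V. f (c *\<^sub>R x) = c * f x)"

definition bdd_fun_on :: "('a::real_vector \<Rightarrow> real) \<Rightarrow> 'a set \<Rightarrow> ('a \<Rightarrow> real) \<Rightarrow> bool" where
  "bdd_fun_on p V f \<longleftrightarrow> lin_on V f \<and> (\<exists>C. \<forall>x\<in>V. \<bar>f x\<bar> \<le> C * p x)"

definition fun_norm_on :: "('a::real_vector \<Rightarrow> real) \<Rightarrow> 'a set \<Rightarrow> ('a \<Rightarrow> real) \<Rightarrow> real" where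
  "fun_norm_on p V f = Sup {\<bar>f x\<bar> | x. x \<in> V \<and> p x \<le> 1}"

definition HB_set :: "('a::real_normed_vector \<Rightarrow> real) \<Rightarrow> 'a set \<Rightarrow> ('a \<Rightarrow> real) \<Rightarrow> ('a \<Rightarrow>\<^sub>L real) set" where
  "HB_set p V v = {e. bdd_fun_on p UNIV (blinfun_apply e) \<and>
                      (\<forall>x\<in>V. blinfun_apply e x = v x) \<and>
                      fun_norm_on p UNIV (blinfun_apply e) = fun_norm_on p V v}"

text \<open>dim A = dim span (A - a) for a in A; "dim A \<le> n" including finite-dimensionality.\<close>
definition set_dim_le :: "'b::real_vector set \<Rightarrow> nat \<Rightarrow> bool" where
  "set_dim_le A n \<longleftrightarrow> (\<forall>a\<in>A. (\<exists>B. finite B \<and> (\<lambda>x. x - a) ` A \<subseteq> span B) \<and>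
                                 dim (span ((\<lambda>x. x - a) ` A)) \<le> n)"

definition prop_kU :: "('a::real_normed_vector \<Rightarrow> real) \<Rightarrow> 'a set \<Rightarrow> nat \<Rightarrow> bool" where
  "prop_kU p V k \<longleftrightarrow> (\<forall>v. bdd_fun_on p V v \<and> fun_norm_on p V v = 1 \<longrightarrow>
                          set_dim_le (HB_set p V v) (k - 1))"

end

theory Submission
  imports Defs
begin

lemma dim_mono_fin:
  fixes S T B :: "'b::real_vector set"
  assumes "S \<subseteq> span T" "T \<subseteq> span B" "finite B"
  shows "dim S \<le> dim T"
proof -
  obtain A where A: "A \<subseteq> T" "independent A" "T \<subseteq> span A" "card A = dim T"
    by (rule basis_exists)
  have "finite A" using independent_span_bound[OF assms(3) A(2)] A(1) assms(2) by auto
  have "S \<subseteq> span A" using assms(1) A(3) by (metis span_mono span_span subset_trans)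
  then have "dim S \<le> card A" using \<open>finite A\<close> by (rule dim_le_card)
  with A(4) show ?thesis by simp
qed

lemma dim_single_ok:
  assumes "A \<subseteq> {b}"
  shows "set_dim_le (A :: 'b::real_vector set) n"
  unfolding set_dim_le_def
proof (intro ballI conjI)
  fix a assume a: "a \<in> A"
  have xb: "\<And>x. x \<in> A \<Longrightarrow> x = b" using assms by auto
  have z0: "(\<lambda>x. x - a) ` A \<subseteq> {0}" using xb[OF a] xb by auto
  then have "(\<lambda>x. x - a) ` A \<subseteq> span {}" by simp
  then show "\<exists>B. finite B \<and> (\<lambda>x. x - a) ` A \<subseteq> span B"
    by (intro exI[of _ "{}"]) simp
  have d0: "dim ({} :: 'b set) = 0"
    using dim_eq_card_independent[of "{} :: 'b set"] real_vector.independent_empty by simp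
  from z0 have "(\<lambda>x. x - a) ` A \<subseteq> span {}" by simp
  then have "dim ((\<lambda>x. x - a) ` A) \<le> dim ({} :: 'b set)"
    by (rule dim_mono_fin[where B = "{}"]) simp_all
  then show "dim (span ((\<lambda>x. x - a) ` A)) \<le> n"
    using d0 dim_span[of "(\<lambda>x. x - a) ` A"] by simp
qed

lemma dim_affine_ok:
  assumes "set_dim_le (A :: 'b::real_vector set) n"
    and "A' \<subseteq> (\<lambda>x. c *\<^sub>R x + b) ` A"
  shows "set_dim_le A' n"
  unfolding set_dim_le_def
proof (intro ballI)
  fix a' assume "a' \<in> A'"
  then obtain a where a: "a \<in> A" "a' = c *\<^sub>R a + b" using assms(2) by auto
  define T where "T = (\<lambda>x. x - a) ` A"
  obtain B where B: "finite B" "T \<subseteq> span B" and d: "dim (span T) \<le> n"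
    using assms(1) a(1) unfolding set_dim_le_def T_def by blast
  have sub: "(\<lambda>x. x - a') ` A' \<subseteq> span T"
  proof
    fix y assume "y \<in> (\<lambda>x. x - a') ` A'"
    then obtain x' where "x' \<in> A'" "y = x' - a'" by auto
    then obtain x where x: "x \<in> A" "x' = c *\<^sub>R x + b" using assms(2) by auto
    have "y = c *\<^sub>R (x - a)" using x a \<open>y = x' - a'\<close> by (simp add: algebra_simps)
    moreover have "x - a \<in> T" using x T_def by auto
    ultimately show "y \<in> span T" by (simp add: span_base span_scale)
  qed
  have "span T \<subseteq> span B" using B(2) by (metis span_mono span_span)
  with sub B(1) have "\<exists>B. finite B \<and> (\<lambda>x. x - a') ` A' \<subseteq> span B" by blast
  moreover have "dim (span ((\<lambda>x. x - a') ` A')) \<le> n"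
    using dim_mono_fin[OF sub B(2) B(1)] d dim_span[of T] dim_span[of "(\<lambda>x. x - a') ` A'"] by simp
  ultimately show "(\<exists>B. finite B \<and> (\<lambda>x. x - a') ` A' \<subseteq> span B) \<and>
         dim (span ((\<lambda>x. x - a') ` A')) \<le> n" by blast
qed

lemma fun_norm_blinfun:
  fixes e :: "'a::real_normed_vector \<Rightarrow>\<^sub>L real"
  shows "fun_norm_on norm UNIV (blinfun_apply e) = norm e"
proof -
  let ?S = "{\<bar>blinfun_apply e x\<bar> | x. x \<in> UNIV \<and> norm x \<le> 1}"
  have ne: "?S \<noteq> {}" by (auto intro: exI[of _ 0])
  have ub: "\<And>t. t \<in> ?S \<Longrightarrow> t \<le> norm e"
  proof -
    fix t assume "t \<in> ?S"
    then obtain x where "t = \<bar>blinfun_apply e x\<bar>" "norm x \<le> 1" by auto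
    moreover have "\<bar>blinfun_apply e x\<bar> \<le> norm e * norm x" using norm_blinfun[of e x] by simp
    moreover have "norm e * norm x \<le> norm e" using \<open>norm x \<le> 1\<close>
      by (simp add: mult_left_le)
    ultimately show "t \<le> norm e" by linarith
  qed
  have bdd: "bdd_above ?S" by (rule bdd_aboveI[of _ "norm e"]) (rule ub)
  have le1: "Sup ?S \<le> norm e" using ne ub by (intro cSup_least) auto
  have z: "\<bar>blinfun_apply e 0\<bar> \<in> ?S" by (intro CollectI exI[of _ 0]) simp
  have s0: "0 \<le> Sup ?S" by (rule cSup_upper2[OF z _ bdd]) simp
  have "norm e \<le> Sup ?S"
  proof (rule norm_blinfun_bound[OF s0])
    fix x
    show "norm (blinfun_apply e x) \<le> Sup ?S * norm x"
    proof (cases "x = 0")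
      case True then show ?thesis by simp
    next
      case False
      then have np: "norm x > 0" by simp
      have "norm (x /\<^sub>R norm x) \<le> 1" using np by simp
      then have "\<bar>blinfun_apply e (x /\<^sub>R norm x)\<bar> \<in> ?S" by blast
      then have "\<bar>blinfun_apply e (x /\<^sub>R norm x)\<bar> \<le> Sup ?S" using bdd by (rule cSup_upper)
      moreover have "blinfun_apply e (x /\<^sub>R norm x) = blinfun_apply e x / norm x"
        by (simp add: blinfun.scaleR_right divide_inverse_commute)
      ultimately have "\<bar>blinfun_apply e x\<bar> / norm x \<le> Sup ?S" by simp
      then show ?thesis using np by (simp add: divide_le_eq mult.commute)
    qed
  qed
  with le1 show ?thesis unfolding fun_norm_on_def by simp
qed


lemma lin_on_blinfun: "lin_on V (blinfun_apply (e :: 'a::real_normed_vector \<Rightarrow>\<^sub>L real))"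
  unfolding lin_on_def by (simp add: blinfun.add_right blinfun.scaleR_right)

theorem theorem4p9:
  fixes Y Z :: "'a::banach set"
    and k :: nat
  assumes "k \<ge> 1"
    and "subspace Y" and "closed Y"
    and "subspace Z" and "closed Z"
    and "Z \<subseteq> Y"
    and "M_ideal Z"
    and "prop_kU (quotient_norm Z) Y k"
  shows "prop_kU norm Y k"
proof -
  obtain G where G: "subspace G" "\<forall>f. \<exists>u\<in>annihilator Z. \<exists>g\<in>G. f = u + g"
    "annihilator Z \<inter> G = {0}" "\<forall>u\<in>annihilator Z. \<forall>g\<in>G. norm (u + g) = norm u + norm g"
    using assms(7) unfolding M_ideal_def by blast
  have Z0: "0 \<in> Z" using assms(4) by (rule subspace_0)
  have Y0: "0 \<in> Y" using assms(2) by (rule subspace_0)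
  have infd_le: "infdist x Z \<le> norm x" for x
    using infdist_le[OF Z0, of x] by (simp add: dist_norm)
  have Q: "\<bar>blinfun_apply u x\<bar> \<le> norm u * infdist x Z" if u: "u \<in> annihilator Z" for u x
  proof -
    have dz: "\<bar>blinfun_apply u x\<bar> \<le> norm u * dist x z" if z: "z \<in> Z" for z
    proof -
      have "blinfun_apply u z = 0" using u z unfolding annihilator_def by auto
      then have "blinfun_apply u x = blinfun_apply u (x - z)" by (simp add: blinfun.diff_right)
      then show ?thesis using norm_blinfun[of u "x - z"] by (simp add: dist_norm)
    qed
    show ?thesis
    proof (cases "norm u = 0")
      case True
      then show ?thesis using dz[OF Z0] by simp
    next
      case False
      then have np: "norm u > 0" by simp
      have "\<bar>blinfun_apply u x\<bar> / norm u \<le> infdist x Z"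
      proof -
        have "\<bar>blinfun_apply u x\<bar> / norm u \<le> (INF a\<in>Z. dist x a)"
          using Z0 dz np by (intro cINF_greatest) (auto simp: divide_le_eq mult.commute)
        moreover have "Z \<noteq> {}" using Z0 by auto
        ultimately show ?thesis using infdist_notempty[of Z x] by simp
      qed
      then show ?thesis using np by (simp add: divide_le_eq mult.commute)
    qed
  qed
  have Q2: "fun_norm_on (quotient_norm Z) UNIV (blinfun_apply u) = norm u"
    if u: "u \<in> annihilator Z" for u
  proof -
    let ?S = "{\<bar>blinfun_apply u x\<bar> | x. x \<in> UNIV \<and> norm x \<le> 1}"
    let ?T = "{\<bar>blinfun_apply u x\<bar> | x. x \<in> UNIV \<and> quotient_norm Z x \<le> 1}"
    have ub: "t \<le> norm u" if tT: "t \<in> ?T" for t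
    proof -
      obtain x where x: "t = \<bar>blinfun_apply u x\<bar>" "infdist x Z \<le> 1"
        using tT unfolding quotient_norm_def by auto
      have "norm u * infdist x Z \<le> norm u" using x(2) by (simp add: mult_left_le)
      then show ?thesis using Q[OF u, of x] x(1) by linarith
    qed
    have bT: "bdd_above ?T" by (rule bdd_aboveI[of _ "norm u"]) (rule ub)
    have neT: "?T \<noteq> {}" unfolding quotient_norm_def using Z0 by (auto intro!: exI[of _ 0])
    have neS: "?S \<noteq> {}" by (auto intro!: exI[of _ 0])
    have sub: "?S \<subseteq> ?T" unfolding quotient_norm_def using infd_le by (auto intro: order_trans)
    have "Sup ?T \<le> norm u" using neT ub by (intro cSup_least) auto
    moreover have "Sup ?S \<le> Sup ?T" by (rule cSup_subset_mono[OF neS bT sub])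
    moreover have "Sup ?S = norm u" using fun_norm_blinfun[of u] unfolding fun_norm_on_def by simp
    ultimately show ?thesis unfolding fun_norm_on_def by simp
  qed
  show ?thesis unfolding prop_kU_def
  proof (intro allI impI)
    fix v assume v: "bdd_fun_on norm Y v \<and> fun_norm_on norm Y v = 1"
    define H where "H = HB_set norm Y v"
    have "set_dim_le H (k - 1)"
    proof (cases "H = {}")
      case True
      then show ?thesis unfolding set_dim_le_def by simp
    next
      case False
      then obtain e1 where e1: "e1 \<in> H" by blast
      obtain u1 g0 where u1: "u1 \<in> annihilator Z" and g0: "g0 \<in> G" and e1d: "e1 = u1 + g0"
        using G(2) by blast
      have Hn: "norm e = 1" "\<forall>x\<in>Y. blinfun_apply e x = v x" if "e \<in> H" for e
        using that v fun_norm_blinfun[of e] unfolding H_def HB_set_def by auto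
      have decomp: "e - g0 \<in> annihilator Z \<and> norm (e - g0) = 1 - norm g0" if e: "e \<in> H" for e
      proof -
        obtain u g where u: "u \<in> annihilator Z" and g: "g \<in> G" and ed: "e = u + g"
          using G(2) by blast
        have "g - g0 \<in> annihilator Z"
          unfolding annihilator_def
        proof (intro CollectI ballI)
          fix z assume z: "z \<in> Z"
          then have zY: "z \<in> Y" using assms(6) by auto
          have "blinfun_apply e z = blinfun_apply e1 z" using Hn(2)[OF e] Hn(2)[OF e1] zY by simp
          moreover have "blinfun_apply u z = 0" "blinfun_apply u1 z = 0"
            using u u1 z unfolding annihilator_def by auto
          ultimately show "blinfun_apply (g - g0) z = 0"
            using ed e1d by (simp add: blinfun.diff_left blinfun.add_left)
        qed
        moreover have "g - g0 \<in> G" using G(1) g g0 by (simp add: subspace_diff)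
        ultimately have "g - g0 = 0" using G(3) by blast
        then have "g = g0" by simp
        then have "e - g0 = u" using ed by simp
        moreover have "norm e = norm u + norm g0" using G(4) u g0 ed \<open>g = g0\<close> by simp
        ultimately show ?thesis using u Hn(1)[OF e] by simp
      qed
      define c where "c = 1 - norm g0"
      have u1e: "u1 = e1 - g0" using e1d by simp
      have nu1: "norm u1 = c" using decomp[OF e1] u1e c_def by simp
      have c0: "c \<ge> 0" using nu1 by auto
      show ?thesis
      proof (cases "c = 0")
        case True
        have "H \<subseteq> {g0}"
        proof
          fix e assume "e \<in> H"
          then have "norm (e - g0) = 0" using decomp True c_def by simp
          then show "e \<in> {g0}" by simp
        qed
        then show ?thesis by (rule dim_single_ok)
      next
        case False
        then have cp: "c > 0" using c0 by simp
        define w where "w = (\<lambda>y. (v y - blinfun_apply g0 y) / c)"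
        have wY: "w y = blinfun_apply u1 y / c" if "y \<in> Y" for y
          using Hn(2)[OF e1] that unfolding w_def u1e by (simp add: blinfun.diff_left)
        have wb: "\<bar>w y\<bar> \<le> infdist y Z" if "y \<in> Y" for y
        proof -
          have "\<bar>blinfun_apply u1 y\<bar> \<le> c * infdist y Z" using Q[OF u1, of y] unfolding nu1 .
          then have "\<bar>blinfun_apply u1 y\<bar> / c \<le> infdist y Z"
            by (simp add: pos_divide_le_eq[OF cp] mult.commute)
          moreover have "\<bar>w y\<bar> = \<bar>blinfun_apply u1 y\<bar> / c" using wY[OF that] cp by simp
          ultimately show ?thesis by simp
        qed
        have linw: "lin_on Y w"
          unfolding lin_on_def
        proof (intro conjI ballI allI)
          fix x y assume "x \<in> Y" "y \<in> Y"
          then show "w (x + y) = w x + w y"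
            using wY subspace_add[OF assms(2)] by (simp add: blinfun.add_right add_divide_distrib)
        next
          fix a x assume "x \<in> Y"
          then show "w (a *\<^sub>R x) = a * w x"
            using wY subspace_scale[OF assms(2)] by (simp add: blinfun.scaleR_right)
        qed
        have bw: "bdd_fun_on (quotient_norm Z) Y w"
          unfolding bdd_fun_on_def quotient_norm_def using linw wb by (intro conjI exI[of _ 1]) auto
        let ?W = "{\<bar>w y\<bar> | y. y \<in> Y \<and> quotient_norm Z y \<le> 1}"
        have wub: "t \<le> 1" if tW: "t \<in> ?W" for t
        proof -
          obtain y where y: "t = \<bar>w y\<bar>" "y \<in> Y" "infdist y Z \<le> 1"
            using tW unfolding quotient_norm_def by blast
          show ?thesis using wb[OF y(2)] y by linarith
        qed
        have bW: "bdd_above ?W" by (rule bdd_aboveI[of _ 1]) (rule wub)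
        have "\<bar>w 0\<bar> \<in> ?W" using Y0 Z0 unfolding quotient_norm_def by (intro CollectI exI[of _ 0]) simp
        then have neW: "?W \<noteq> {}" by blast
        have W1: "Sup ?W \<le> 1" by (rule cSup_least[OF neW]) (rule wub)
        let ?V = "{\<bar>v y\<bar> | y. y \<in> Y \<and> norm y \<le> 1}"
        have "\<bar>v 0\<bar> \<in> ?V" using Y0 by (intro CollectI exI[of _ 0]) simp
        then have neV: "?V \<noteq> {}" by blast
        have "Sup ?V \<le> c * Sup ?W + norm g0"
        proof (rule cSup_least[OF neV])
          fix t assume "t \<in> ?V"
          then obtain y where y: "t = \<bar>v y\<bar>" "y \<in> Y" "norm y \<le> 1" by auto
          have "infdist y Z \<le> 1" using y(3) infd_le[of y] by linarith
          then have "\<bar>w y\<bar> \<in> ?W" using y(2) unfolding quotient_norm_def by blast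
          then have "\<bar>w y\<bar> \<le> Sup ?W" using bW by (rule cSup_upper)
          then have m1: "c * \<bar>w y\<bar> \<le> c * Sup ?W" using cp by (simp add: mult_left_mono)
          have a1: "\<bar>blinfun_apply g0 y\<bar> \<le> norm g0 * norm y" using norm_blinfun[of g0 y] by simp
          have a2: "norm g0 * norm y \<le> norm g0" using y(3) by (simp add: mult_left_le)
          have vy: "v y = c * w y + blinfun_apply g0 y" unfolding w_def using cp by simp
          have "\<bar>v y\<bar> \<le> \<bar>c * w y\<bar> + \<bar>blinfun_apply g0 y\<bar>" unfolding vy by (rule abs_triangle_ineq)
          also have "\<bar>c * w y\<bar> = c * \<bar>w y\<bar>" using cp by (simp add: abs_mult)
          finally have "\<bar>v y\<bar> \<le> c * Sup ?W + norm g0" using m1 a1 a2 by linarith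
          then show "t \<le> c * Sup ?W + norm g0" using y(1) by simp
        qed
        moreover have "Sup ?V = 1" using v unfolding fun_norm_on_def by simp
        ultimately have "1 \<le> c * Sup ?W + (1 - c)" using c_def by simp
        then have "c * 1 \<le> c * Sup ?W" by simp
        then have "1 \<le> Sup ?W" using cp by simp
        with W1 have fw: "fun_norm_on (quotient_norm Z) Y w = 1" unfolding fun_norm_on_def by simp
        have hyp: "set_dim_le (HB_set (quotient_norm Z) Y w) (k - 1)"
          using assms(8) bw fw unfolding prop_kU_def by blast
        have "H \<subseteq> (\<lambda>x. c *\<^sub>R x + g0) ` HB_set (quotient_norm Z) Y w"
        proof
          fix e assume e: "e \<in> H"
          define u' where "u' = (1 / c) *\<^sub>R (e - g0)"
          have ua: "u' \<in> annihilator Z" using decomp[OF e]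
            unfolding u'_def annihilator_def by (simp add: blinfun.scaleR_left)
          have nu': "norm u' = 1" using decomp[OF e] cp unfolding u'_def c_def by simp
          have "u' \<in> HB_set (quotient_norm Z) Y w"
            unfolding HB_set_def
          proof (intro CollectI conjI ballI)
            show "bdd_fun_on (quotient_norm Z) UNIV (blinfun_apply u')"
              unfolding bdd_fun_on_def quotient_norm_def
              using lin_on_blinfun Q[OF ua] by blast
            fix x assume "x \<in> Y"
            then show "blinfun_apply u' x = w x" using Hn(2)[OF e]
              unfolding u'_def w_def by (simp add: blinfun.scaleR_left blinfun.diff_left)
          next
            show "fun_norm_on (quotient_norm Z) UNIV (blinfun_apply u') = fun_norm_on (quotient_norm Z) Y w"
              using Q2[OF ua] nu' fw by simp
          qed
          moreover have "e = c *\<^sub>R u' + g0" unfolding u'_def using cp by simp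
          ultimately show "e \<in> (\<lambda>x. c *\<^sub>R x + g0) ` HB_set (quotient_norm Z) Y w" by blast
        qed
        then show ?thesis by (rule dim_affine_ok[OF hyp])
      qed
    qed
    then show "set_dim_le (HB_set norm Y v) (k - 1)" by (simp add: H_def)
  qed
qed

end
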